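(* For every $T\in\mathcal{D}_H'(\mathbb{R}^d)$ the map $M_T:\mathcal{D}(\mathbb{R}^d)\to\mathcal{D}(\mathbb{R}^d)$ is a continuous linear operator.
   Context: $\mathbb{R}_*=\mathbb{R}\setminus\{0\}$; $\xi y=(\xi_1y_1,\dots,\xi_dy_d)$. $\mathcal{D}_H'(\mathbb{R}^d)$ is the set of distributions $T\in\mathcal{D}'(\mathbb{R}^d)$ such that for every $\varphi\in\mathcal{D}(\mathbb{R}^d)$ the function $y\mapsto T_\xi\varphi(\xi y)$, $y\in\mathbb{R}_*^d$, is the restriction of a function in $\mathcal{D}(\mathbb{R}^d)$. For $T\in\mathcal{D}_H'(\mathbb{R}^d)$, $M_T\varphi$ denotes this (unique continuous) extension. *)

theory Defs
  imports "HOL-Analysis.Analysis"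
begin

text \<open>Test functions on R^d (complex valued), the index type 'd stands for {1..d}.\<close>

definition pdiff :: "'d::finite \<Rightarrow> (real^'d \<Rightarrow> complex) \<Rightarrow> (real^'d \<Rightarrow> complex)" where
  "pdiff i f = (\<lambda>x. frechet_derivative f (at x) (axis i 1))"

fun Dmulti :: "'d::finite list \<Rightarrow> (real^'d \<Rightarrow> complex) \<Rightarrow> (real^'d \<Rightarrow> complex)" where
  "Dmulti [] f = f"
| "Dmulti (i # is) f = pdiff i (Dmulti is f)"

definition smooth :: "(real^'d::finite \<Rightarrow> complex) \<Rightarrow> bool" where
  "smooth f \<longleftrightarrow> (\<forall>is x. Dmulti is f differentiable (at x))"

definition tsupport :: "(real^'d::finite \<Rightarrow> complex) \<Rightarrow> (real^'d) set" where
  "tsupport f = closure {x. f x \<noteq> 0}"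

definition test_fun :: "(real^'d::finite \<Rightarrow> complex) \<Rightarrow> bool" where
  "test_fun f \<longleftrightarrow> smooth f \<and> compact (tsupport f)"

definition D_conv :: "(nat \<Rightarrow> real^'d::finite \<Rightarrow> complex) \<Rightarrow> (real^'d \<Rightarrow> complex) \<Rightarrow> bool" where
  "D_conv \<phi> \<psi> \<longleftrightarrow> (\<forall>n. test_fun (\<phi> n)) \<and> test_fun \<psi> \<and>
     (\<exists>K. compact K \<and> (\<forall>n. tsupport (\<phi> n) \<subseteq> K)) \<and>
     (\<forall>is. uniform_limit UNIV (\<lambda>n. Dmulti is (\<phi> n)) (Dmulti is \<psi>) sequentially)"

text \<open>Linear maps on D are continuous iff sequentially continuous (D is an LF space).\<close>
definition D_linear :: "((real^'d::finite \<Rightarrow> complex) \<Rightarrow> complex) \<Rightarrow> bool" where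
  "D_linear L \<longleftrightarrow> (\<forall>f g. test_fun f \<longrightarrow> test_fun g \<longrightarrow> L (\<lambda>x. f x + g x) = L f + L g) \<and>
     (\<forall>c f. test_fun f \<longrightarrow> L (\<lambda>x. c * f x) = c * L f)"

definition distribution :: "((real^'d::finite \<Rightarrow> complex) \<Rightarrow> complex) \<Rightarrow> bool" where
  "distribution T \<longleftrightarrow> D_linear T \<and>
     (\<forall>\<phi> \<psi>. D_conv \<phi> \<psi> \<longrightarrow> (\<lambda>n. T (\<phi> n)) \<longlonglongrightarrow> T \<psi>)"

definition Rstar :: "(real^'d::finite) set" where
  "Rstar = {y. \<forall>i. y $ i \<noteq> 0}"

definition cmul :: "real^'d::finite \<Rightarrow> real^'d \<Rightarrow> real^'d" where
  "cmul \<xi> y = (\<chi> i. \<xi> $ i * y $ i)"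

definition DH' :: "((real^'d::finite \<Rightarrow> complex) \<Rightarrow> complex) set" where
  "DH' = {T. distribution T \<and>
     (\<forall>\<phi>. test_fun \<phi> \<longrightarrow> (\<exists>g. test_fun g \<and> (\<forall>y\<in>Rstar. g y = T (\<lambda>\<xi>. \<phi> (cmul \<xi> y)))))}"

text \<open>M_T phi: the (unique) test function extending y \<mapsto> T_xi phi(xi y) from R_*^d.\<close>
definition M_op :: "((real^'d::finite \<Rightarrow> complex) \<Rightarrow> complex) \<Rightarrow> (real^'d \<Rightarrow> complex) \<Rightarrow> (real^'d \<Rightarrow> complex)" where
  "M_op T \<phi> = (SOME g. test_fun g \<and> (\<forall>y\<in>Rstar. g y = T (\<lambda>\<xi>. \<phi> (cmul \<xi> y))))"

end

theory Submission
  imports Defs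
begin

lemma pdiff_at: "(f has_derivative f') (at x) \<Longrightarrow> pdiff i f x = f' (axis i 1)"
  unfolding pdiff_def by (metis frechet_derivative_at)

lemma smooth_deriv: "smooth f \<Longrightarrow> (Dmulti is f has_derivative frechet_derivative (Dmulti is f) (at x)) (at x)"
  unfolding smooth_def using frechet_derivative_works by blast

lemma Dmulti_lin:
  assumes "smooth f" "smooth g"
  shows "Dmulti is (\<lambda>x. a * f x + b * g x) = (\<lambda>x. a * Dmulti is f x + b * Dmulti is g x)"
proof (induction "is")
  case Nil then show ?case by simp
next
  case (Cons i "is")
  show ?case
  proof
    fix x
    have df: "(Dmulti is f has_derivative frechet_derivative (Dmulti is f) (at x)) (at x)"
      and dg: "(Dmulti is g has_derivative frechet_derivative (Dmulti is g) (at x)) (at x)"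
      using assms smooth_deriv by blast+
    have "((\<lambda>x. a * Dmulti is f x + b * Dmulti is g x) has_derivative
       (\<lambda>h. a * frechet_derivative (Dmulti is f) (at x) h + b * frechet_derivative (Dmulti is g) (at x) h)) (at x)"
      by (intro derivative_intros df dg)
    then show "Dmulti (i # is) (\<lambda>x. a * f x + b * g x) x = a * Dmulti (i # is) f x + b * Dmulti (i # is) g x"
      using Cons by (simp add: pdiff_at[OF df] pdiff_at[OF dg] pdiff_at)
  qed
qed

lemma smooth_lin:
  assumes "smooth f" "smooth g"
  shows "smooth (\<lambda>x. a * f x + b * g x)"
  unfolding smooth_def
proof (intro allI)
  fix "is" x
  have "(Dmulti is f) differentiable (at x)" "(Dmulti is g) differentiable (at x)"
    using assms unfolding smooth_def by auto
  then show "Dmulti is (\<lambda>x. a * f x + b * g x) differentiable (at x)"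
    unfolding Dmulti_lin[OF assms] by (intro derivative_intros) auto
qed


lemma Dmulti_zero: "Dmulti is (\<lambda>x. 0) = (\<lambda>x. 0)"
proof (induction "is")
  case (Cons i "is")
  have "((\<lambda>x::real^'a. 0::complex) has_derivative (\<lambda>h. 0)) (at x)" for x by simp
  then have "pdiff i (\<lambda>x::real^'a. 0::complex) x = 0" for x using pdiff_at by metis
  then show ?case using Cons by (auto intro!: ext)
qed simp

lemma Dmulti_local:
  assumes "open U" "\<And>x. x \<in> U \<Longrightarrow> f x = g x" "x \<in> U"
  shows "Dmulti is f x = Dmulti is g x"
  using assms(3)
proof (induction "is" arbitrary: x)
  case (Cons i "is")
  have "(\<lambda>f'. (Dmulti is f has_derivative f') (at x)) = (\<lambda>f'. (Dmulti is g has_derivative f') (at x))"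
  proof (intro ext iffI)
    fix f' assume "(Dmulti is f has_derivative f') (at x)"
    then show "(Dmulti is g has_derivative f') (at x)"
      by (rule has_derivative_transform_within_open[OF _ assms(1) Cons.prems]) (use Cons.IH in auto)
  next
    fix f' assume "(Dmulti is g has_derivative f') (at x)"
    then show "(Dmulti is f has_derivative f') (at x)"
      by (rule has_derivative_transform_within_open[OF _ assms(1) Cons.prems]) (use Cons.IH in auto)
  qed
  then show ?case by (simp add: pdiff_def frechet_derivative_def)
qed (use assms in simp)

lemma tsupport_Dmulti: "tsupport (Dmulti is f) \<subseteq> tsupport f"
proof -
  have "{x. Dmulti is f x \<noteq> 0} \<subseteq> tsupport f"
  proof
    fix x assume x: "x \<in> {x. Dmulti is f x \<noteq> 0}"
    show "x \<in> tsupport f"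
    proof (rule ccontr)
      assume "x \<notin> tsupport f"
      then have "Dmulti is f x = Dmulti is (\<lambda>x. 0) x"
        by (intro Dmulti_local[of "- tsupport f"]) (auto simp: tsupport_def intro: closure_subset[THEN subsetD])
      with x show False by (simp add: Dmulti_zero)
    qed
  qed
  then show ?thesis unfolding tsupport_def by (simp add: closure_minimal)
qed


lemma Dmulti_transl:
  assumes "smooth f"
  shows "Dmulti is (\<lambda>x. f (x + a)) = (\<lambda>x. Dmulti is f (x + a))"
proof (induction "is")
  case (Cons i "is")
  show ?case
  proof
    fix x
    have df: "(Dmulti is f has_derivative frechet_derivative (Dmulti is f) (at (x + a))) (at (x + a))"
      using assms smooth_deriv by blast
    have "((\<lambda>x. Dmulti is f (x + a)) has_derivative frechet_derivative (Dmulti is f) (at (x + a))) (at x)"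
      using has_derivative_compose[OF has_derivative_add_const[OF has_derivative_ident] df] by simp
    then show "Dmulti (i # is) (\<lambda>x. f (x + a)) x = Dmulti (i # is) f (x + a)"
      using Cons by (simp add: pdiff_at[OF df] pdiff_at)
  qed
qed simp

lemma smooth_transl: "smooth f \<Longrightarrow> smooth (\<lambda>x. f (x + a))"
  unfolding smooth_def
proof (intro allI)
  fix "is" x assume s: "\<forall>is x. Dmulti is f differentiable at x"
  have "((\<lambda>x. Dmulti is f (x + a)) has_derivative frechet_derivative (Dmulti is f) (at (x + a))) (at x)"
    using has_derivative_compose[OF has_derivative_add_const[OF has_derivative_ident] smooth_deriv[of f "is" "x + a"]] s
    by (simp add: smooth_def)
  then show "Dmulti is (\<lambda>x. f (x + a)) differentiable at x"
    unfolding Dmulti_transl[OF s[folded smooth_def]] differentiable_def by blast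
qed

lemma cmul_linear: "bounded_linear (\<lambda>h::real^'d::finite. cmul h y)"
proof -
  have "linear (\<lambda>h::real^'d::finite. cmul h y)"
    by (rule linearI) (auto simp: cmul_def vec_eq_iff algebra_simps)
  then show ?thesis by (simp add: linear_conv_bounded_linear)
qed

lemma cmul_axis: "cmul (axis i 1) y = (y $ i) *\<^sub>R axis i 1"
  by (auto simp: cmul_def vec_eq_iff axis_def)

lemma Dmulti_scale:
  assumes "smooth f"
  shows "Dmulti is (\<lambda>\<xi>. f (cmul \<xi> y)) = (\<lambda>\<xi>. of_real (\<Prod>i\<leftarrow>is. y $ i) * Dmulti is f (cmul \<xi> y))"
proof (induction "is")
  case (Cons i "is")
  show ?case
  proof
    fix x
    let ?c = "of_real (\<Prod>i\<leftarrow>is. y $ i) :: complex"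
    have df: "(Dmulti is f has_derivative frechet_derivative (Dmulti is f) (at (cmul x y))) (at (cmul x y))"
      using assms smooth_deriv by blast
    have lin: "linear (frechet_derivative (Dmulti is f) (at (cmul x y)))"
      using has_derivative_linear[OF df] .
    have "((\<lambda>x. Dmulti is f (cmul x y)) has_derivative (\<lambda>h. frechet_derivative (Dmulti is f) (at (cmul x y)) (cmul h y))) (at x)"
      using has_derivative_compose[OF bounded_linear_imp_has_derivative[OF cmul_linear] df] by simp
    then have "((\<lambda>x. ?c * Dmulti is f (cmul x y)) has_derivative (\<lambda>h. ?c * frechet_derivative (Dmulti is f) (at (cmul x y)) (cmul h y))) (at x)"
      by (intro derivative_intros)
    then have "pdiff i (\<lambda>x. ?c * Dmulti is f (cmul x y)) x = ?c * frechet_derivative (Dmulti is f) (at (cmul x y)) ((y $ i) *\<^sub>R axis i 1)"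
      by (simp add: pdiff_at cmul_axis)
    also have "\<dots> = ?c * of_real (y $ i) * pdiff i (Dmulti is f) (cmul x y)"
      using linear_scale[OF lin] by (simp add: pdiff_def scaleR_conv_of_real)
    finally show "Dmulti (i # is) (\<lambda>\<xi>. f (cmul \<xi> y)) x = of_real (\<Prod>i\<leftarrow>i # is. y $ i) * Dmulti (i # is) f (cmul x y)"
      using Cons by (simp add: mult_ac)
  qed
qed simp


lemma smooth_scale: "smooth f \<Longrightarrow> smooth (\<lambda>\<xi>. f (cmul \<xi> y))"
  unfolding smooth_def
proof (intro allI)
  fix "is" x assume s: "\<forall>is x. Dmulti is f differentiable at x"
  have "((\<lambda>x. Dmulti is f (cmul x y)) has_derivative (\<lambda>h. frechet_derivative (Dmulti is f) (at (cmul x y)) (cmul h y))) (at x)"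
    using has_derivative_compose[OF bounded_linear_imp_has_derivative[OF cmul_linear] smooth_deriv[of f "is" "cmul x y"]] s
    by (simp add: smooth_def)
  then have "(\<lambda>x. Dmulti is f (cmul x y)) differentiable at x"
    unfolding differentiable_def by blast
  then show "Dmulti is (\<lambda>\<xi>. f (cmul \<xi> y)) differentiable at x"
    unfolding Dmulti_scale[OF s[folded smooth_def]] by (intro derivative_intros)
qed

lemma compact_closed_sub: "compact S \<Longrightarrow> closed T \<Longrightarrow> T \<subseteq> S \<Longrightarrow> compact T"
  by (metis compact_Int_closed inf.absorb_iff2)

lemma closed_tsupport[simp]: "closed (tsupport f)"
  by (simp add: tsupport_def)

lemma tsupport_zero: "x \<notin> tsupport f \<Longrightarrow> f x = 0"
  unfolding tsupport_def using closure_subset[of "{x. f x \<noteq> 0}"] by auto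

lemma test_fun_lin:
  assumes "test_fun f" "test_fun g"
  shows "test_fun (\<lambda>x. a * f x + b * g x)"
proof -
  have "{x. a * f x + b * g x \<noteq> 0} \<subseteq> {x. f x \<noteq> 0} \<union> {x. g x \<noteq> 0}" by auto
  then have "tsupport (\<lambda>x. a * f x + b * g x) \<subseteq> tsupport f \<union> tsupport g"
    unfolding tsupport_def closure_Un[symmetric] by (rule closure_mono)
  moreover have "compact (tsupport f \<union> tsupport g)" using assms unfolding test_fun_def by blast
  ultimately have "compact (tsupport (\<lambda>x. a * f x + b * g x))"
    using compact_closed_sub closed_tsupport by blast
  then show ?thesis using assms smooth_lin unfolding test_fun_def by blast
qed

lemma test_fun_zero: "test_fun (\<lambda>x. 0)"
  unfolding test_fun_def smooth_def tsupport_def Dmulti_zero by auto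

lemma Dmulti_cont: "smooth f \<Longrightarrow> continuous (at x) (Dmulti is f)"
  unfolding smooth_def using differentiable_imp_continuous_within by blast

lemma Dmulti_cont_on: "smooth f \<Longrightarrow> continuous_on S (Dmulti is f)"
  by (simp add: Dmulti_cont continuous_at_imp_continuous_on)

lemma test_fun_bounded:
  assumes "test_fun f"
  shows "\<exists>B. \<forall>x. cmod (Dmulti is f x) \<le> B"
proof -
  have "compact (Dmulti is f ` tsupport f)"
    using assms unfolding test_fun_def by (meson Dmulti_cont_on compact_continuous_image)
  then obtain B where B: "\<And>z. z \<in> Dmulti is f ` tsupport f \<Longrightarrow> norm z \<le> B"
    by (meson bounded_iff compact_imp_bounded)
  have "cmod (Dmulti is f x) \<le> max B 0" for x
  proof (cases "x \<in> tsupport f")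
    case True then have "cmod (Dmulti is f x) \<le> B" using B by blast
    then show ?thesis by linarith
  next
    case False then have "x \<notin> tsupport (Dmulti is f)" using tsupport_Dmulti by blast
    then show ?thesis by (simp add: tsupport_zero)
  qed
  then show ?thesis by blast
qed

definition "inv_vec (y::real^'d::finite) = (\<chi> i. 1 / y $ i)"

lemma cmul_inv: "y \<in> Rstar \<Longrightarrow> cmul (cmul \<xi> y) (inv_vec y) = \<xi>"
  by (auto simp: cmul_def inv_vec_def Rstar_def vec_eq_iff)

lemma tsupport_scale:
  assumes "y \<in> Rstar"
  shows "tsupport (\<lambda>\<xi>. f (cmul \<xi> y)) \<subseteq> (\<lambda>x. cmul x (inv_vec y)) ` tsupport f"
proof -
  have cl: "closed ((\<lambda>\<xi>. cmul \<xi> y) -` tsupport f)"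
    by (intro continuous_closed_vimage closed_tsupport linear_continuous_at cmul_linear)
  have "{\<xi>. f (cmul \<xi> y) \<noteq> 0} \<subseteq> (\<lambda>\<xi>. cmul \<xi> y) -` tsupport f"
    using tsupport_zero by blast
  then have "tsupport (\<lambda>\<xi>. f (cmul \<xi> y)) \<subseteq> (\<lambda>\<xi>. cmul \<xi> y) -` tsupport f"
    unfolding tsupport_def[of "\<lambda>\<xi>. f (cmul \<xi> y)"] using cl closure_minimal by blast
  also have "\<dots> \<subseteq> (\<lambda>x. cmul x (inv_vec y)) ` tsupport f"
  proof
    fix \<xi> assume "\<xi> \<in> (\<lambda>\<xi>. cmul \<xi> y) -` tsupport f"
    then have "cmul \<xi> y \<in> tsupport f" by simp
    moreover have "\<xi> = cmul (cmul \<xi> y) (inv_vec y)" using cmul_inv[OF assms] by simp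
    ultimately show "\<xi> \<in> (\<lambda>x. cmul x (inv_vec y)) ` tsupport f" by blast
  qed
  finally show ?thesis .
qed

lemma compact_scale_img: "compact K \<Longrightarrow> compact ((\<lambda>x. cmul x z) ` K)"
  by (intro compact_continuous_image linear_continuous_on cmul_linear)

lemma test_fun_scale:
  assumes "test_fun f" "y \<in> Rstar"
  shows "test_fun (\<lambda>\<xi>. f (cmul \<xi> y))"
proof -
  have "compact ((\<lambda>x. cmul x (inv_vec y)) ` tsupport f)"
    using assms compact_scale_img unfolding test_fun_def by blast
  then have "compact (tsupport (\<lambda>\<xi>. f (cmul \<xi> y)))"
    using tsupport_scale[OF assms(2), of f] compact_closed_sub closed_tsupport by blast
  then show ?thesis using assms smooth_scale unfolding test_fun_def by blast
qed

definition onev :: "real^'d::finite" where "onev = (\<chi> i. 1)"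

lemma Rstar_dense_shift:
  fixes x :: "real^'d::finite"
  assumes "finite A"
  shows "\<exists>\<delta>>0. \<forall>t. 0 < t \<and> t < \<delta> \<longrightarrow> (\<forall>a\<in>A. x + t *\<^sub>R onev + a \<in> Rstar)"
proof -
  define S where "S = (\<lambda>(i,a). \<bar>x$i + a$i\<bar>) ` {(i,a). a \<in> A \<and> x$i + a$i \<noteq> 0}"
  have fS: "finite S" unfolding S_def
    by (rule finite_imageI, rule finite_subset[of _ "UNIV \<times> A"]) (use assms in auto)
  define \<delta> where "\<delta> = Min (insert 1 S)"
  have pos: "\<delta> > 0" unfolding \<delta>_def using fS by (auto simp: S_def)
  have le: "\<delta> \<le> \<bar>x$i + a$i\<bar>" if "a \<in> A" "x$i + a$i \<noteq> 0" for i a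
    unfolding \<delta>_def using fS that by (intro Min_le) (auto simp: S_def)
  have "x + t *\<^sub>R onev + a \<in> Rstar" if "0 < t" "t < \<delta>" "a \<in> A" for t a
    unfolding Rstar_def
  proof (intro CollectI allI)
    fix i
    show "(x + t *\<^sub>R onev + a) $ i \<noteq> 0"
    proof (cases "x$i + a$i = 0")
      case True then show ?thesis using that by (simp add: onev_def algebra_simps)
    next
      case False then have "\<delta> \<le> \<bar>x$i + a$i\<bar>" using le that by blast
      then show ?thesis using that by (simp add: onev_def)
    qed
  qed
  then show ?thesis using pos by blast
qed

lemma ext_bound:
  fixes F :: "real^'d::finite \<Rightarrow> complex"
  assumes cont: "continuous (at y) F" and "finite A" "open U" "y \<in> U"
    and bd: "\<And>z. z \<in> U \<Longrightarrow> (\<forall>a\<in>A. z + a \<in> Rstar) \<Longrightarrow> cmod (F z) \<le> B"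
  shows "cmod (F y) \<le> B"
proof -
  obtain \<delta> where \<delta>: "\<delta> > 0" "\<And>t. 0 < t \<Longrightarrow> t < \<delta> \<Longrightarrow> \<forall>a\<in>A. y + t *\<^sub>R onev + a \<in> Rstar"
    using Rstar_dense_shift[OF assms(2), of y] by blast
  obtain e where e: "e > 0" "ball y e \<subseteq> U" using assms(3,4) open_contains_ball by blast
  have "((\<lambda>t. y + t *\<^sub>R onev) \<longlongrightarrow> y) (at_right 0)"
    by (rule tendsto_eq_intros refl | simp)+
  then have lim: "((\<lambda>t. cmod (F (y + t *\<^sub>R onev))) \<longlongrightarrow> cmod (F y)) (at_right 0)"
    using cont by (intro tendsto_norm isCont_tendsto_compose[of y F]) (auto simp: continuous_at)
  have ev1: "eventually (\<lambda>t. t < \<delta>) (at_right (0::real))"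
    using \<delta>(1) eventually_at_right_less by (metis add_0 eventually_at_right_field)
  have "eventually (\<lambda>t. dist (y + t *\<^sub>R onev) y < e) (at_right (0::real))"
    using \<open>((\<lambda>t. y + t *\<^sub>R onev) \<longlongrightarrow> y) (at_right 0)\<close> e(1) tendstoD by blast
  moreover have "eventually (\<lambda>t. t > 0) (at_right (0::real))"
    by (simp add: eventually_at_right_less)
  ultimately have "eventually (\<lambda>t. cmod (F (y + t *\<^sub>R onev)) \<le> B) (at_right (0::real))"
    using ev1
  proof eventually_elim
    case (elim t)
    have "y + t *\<^sub>R onev \<in> U" using elim e(2) by (auto simp: dist_commute)
    then show ?case using bd \<delta>(2) elim by (simp add: add.assoc)
  qed
  then show ?thesis
    using tendsto_upperbound[OF lim] by simp
qed

lemma eq_on_Rstar: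
  fixes f g :: "real^'d::finite \<Rightarrow> complex"
  assumes "\<And>x. continuous (at x) f" "\<And>x. continuous (at x) g" "\<And>y. y \<in> Rstar \<Longrightarrow> f y = g y"
  shows "f = g"
proof
  fix x
  have "cmod ((\<lambda>x. f x - g x) x) \<le> 0"
    by (rule ext_bound[of x _ "{0}" UNIV]) (use assms in \<open>auto intro!: continuous_intros\<close>)
  then show "f x = g x" by simp
qed


lemma pdiff_scaled:
  assumes "G differentiable (at z)"
  shows "frechet_derivative G (at z) (s *\<^sub>R axis i 1) = of_real s * pdiff i G z"
proof -
  have lin: "linear (frechet_derivative G (at z))"
    using assms frechet_derivative_works has_derivative_linear by blast
  show ?thesis unfolding pdiff_def
    by (subst linear_scale[OF lin]) (simp add: scaleR_conv_of_real)
qed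

lemma mvt_coord:
  fixes G :: "real^'d::finite \<Rightarrow> complex"
  assumes dG: "\<And>z. G differentiable (at z)" and bd: "\<And>z. cmod (pdiff i G z) \<le> c"
  shows "cmod (G (y + h *\<^sub>R axis i 1) - G y) \<le> c * \<bar>h\<bar>"
proof -
  let ?e = "axis i 1 :: real^'d"
  let ?f = "\<lambda>t::real. G (y + t *\<^sub>R ?e)"
  let ?f' = "\<lambda>t s. frechet_derivative G (at (y + t *\<^sub>R ?e)) (s *\<^sub>R ?e)"
  have c0: "0 \<le> c" using bd[of y] norm_ge_zero order_trans by blast
  have der: "(?f has_derivative ?f' t) (at t within UNIV)" for t
  proof -
    have "((\<lambda>t. y + t *\<^sub>R ?e) has_derivative (\<lambda>s. s *\<^sub>R ?e)) (at t)"
      by (intro derivative_eq_intros) auto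
    from has_derivative_compose[OF this frechet_derivative_works[THEN iffD1, OF dG]]
    show ?thesis by simp
  qed
  have on: "onorm (?f' t) \<le> c" for t
  proof (rule onorm_bound[OF c0])
    fix s :: real
    show "norm (?f' t s) \<le> c * norm s"
      using bd[of "y + t *\<^sub>R ?e"] unfolding pdiff_scaled[OF dG]
      using mult_right_mono[OF _ abs_ge_zero[of s], of "cmod (pdiff i G (y + t *\<^sub>R ?e))" c]
      by (simp add: norm_mult mult.commute)
  qed
  have "norm (?f h - ?f 0) \<le> c * norm (h - 0)"
    by (rule differentiable_bound[OF convex_UNIV der on]) auto
  then show ?thesis by simp
qed

lemma dq_bound:
  fixes G :: "real^'d::finite \<Rightarrow> complex"
  assumes dG: "G differentiable (at y)" and bd: "\<And>h. cmod (G (y + h *\<^sub>R axis i 1) - G y) \<le> c * \<bar>h\<bar>"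
  shows "cmod (pdiff i G y) \<le> c"
proof (rule field_le_epsilon)
  fix e :: real assume e: "0 < e"
  let ?G' = "frechet_derivative G (at y)"
  have "(G has_derivative ?G') (at y)" using dG frechet_derivative_works by blast
  then obtain d where d: "d > 0" "\<And>z. norm (z - y) < d \<Longrightarrow> cmod (G z - G y - ?G' (z - y)) \<le> e * norm (z - y)"
    using e unfolding has_derivative_at_alt by blast
  define h where "h = d / 2"
  have h: "h > 0" "norm ((y + h *\<^sub>R axis i 1) - y) < d" using d(1) by (auto simp: h_def)
  have eq: "?G' (h *\<^sub>R axis i 1) = of_real h * pdiff i G y" using pdiff_scaled[OF dG] .
  have "cmod (of_real h * pdiff i G y) \<le> cmod (G (y + h *\<^sub>R axis i 1) - G y) + cmod (G (y + h *\<^sub>R axis i 1) - G y - ?G' (h *\<^sub>R axis i 1))"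
    unfolding eq using norm_triangle_ineq4[of "G (y + h *\<^sub>R axis i 1) - G y" "G (y + h *\<^sub>R axis i 1) - G y - of_real h * pdiff i G y"]
    by simp
  also have "\<dots> \<le> c * h + e * h"
    using bd[of h] d(2)[OF h(2)] h(1) by (intro add_mono) auto
  finally have "h * cmod (pdiff i G y) \<le> h * (c + e)"
    using h(1) by (simp add: norm_mult algebra_simps)
  then show "cmod (pdiff i G y) \<le> c + e" using h(1) by simp
qed


definition diffop :: "'d::finite \<Rightarrow> real \<Rightarrow> (real^'d \<Rightarrow> complex) \<Rightarrow> (real^'d \<Rightarrow> complex)" where
  "diffop i h g = (\<lambda>y. g (y + h *\<^sub>R axis i 1) - g y)"

fun idiff :: "('d::finite \<times> real) list \<Rightarrow> (real^'d \<Rightarrow> complex) \<Rightarrow> (real^'d \<Rightarrow> complex)" where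
  "idiff [] g = g"
| "idiff (p # ps) g = idiff ps (diffop (fst p) (snd p) g)"

fun shifts :: "('d::finite \<times> real) list \<Rightarrow> (real^'d) set" where
  "shifts [] = {0}"
| "shifts (p # ps) = shifts ps \<union> (\<lambda>a. a + snd p *\<^sub>R axis (fst p) 1) ` shifts ps"

lemma finite_shifts: "finite (shifts ps)"
  by (induction ps) auto

lemma idiff_lim:
  assumes "\<forall>a\<in>shifts ps. (\<lambda>n. G n (y + a)) \<longlonglongrightarrow> g (y + a)"
  shows "(\<lambda>n. idiff ps (G n) y) \<longlonglongrightarrow> idiff ps g y"
  using assms
proof (induction ps arbitrary: G g)
  case Nil then show ?case by simp
next
  case (Cons p ps)
  have "\<forall>a\<in>shifts ps. (\<lambda>n. diffop (fst p) (snd p) (G n) (y + a)) \<longlonglongrightarrow> diffop (fst p) (snd p) g (y + a)"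
  proof
    fix a assume a: "a \<in> shifts ps"
    have 1: "(\<lambda>n. G n (y + (a + snd p *\<^sub>R axis (fst p) 1))) \<longlonglongrightarrow> g (y + (a + snd p *\<^sub>R axis (fst p) 1))"
      using Cons.prems a by auto
    have 2: "(\<lambda>n. G n (y + a)) \<longlonglongrightarrow> g (y + a)" using Cons.prems a by auto
    show "(\<lambda>n. diffop (fst p) (snd p) (G n) (y + a)) \<longlonglongrightarrow> diffop (fst p) (snd p) g (y + a)"
      unfolding diffop_def using tendsto_diff[OF 1 2] by (simp add: add.assoc)
  qed
  then show ?case using Cons.IH by simp
qed

lemma idiff_cont:
  assumes "\<And>x. continuous (at x) g"
  shows "continuous (at x) (idiff ps g)"
  using assms
proof (induction ps arbitrary: g)
  case (Cons p ps)
  have "continuous (at x) (diffop (fst p) (snd p) g)" for x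
    unfolding diffop_def
    by (intro continuous_intros continuous_at_compose[of x "\<lambda>y. y + snd p *\<^sub>R axis (fst p) 1" g, unfolded o_def])
       (auto intro!: continuous_intros Cons.prems)
  then show ?case using Cons.IH by simp
qed simp

lemma diffop_lin: "diffop i h g = (\<lambda>y. 1 * (\<lambda>y. g (y + h *\<^sub>R axis i 1)) y + (-1) * g y)"
  by (simp add: diffop_def)

lemma smooth_diffop: "smooth g \<Longrightarrow> smooth (diffop i h g)"
  unfolding diffop_lin by (intro smooth_lin smooth_transl)

lemma Dmulti_diffop:
  assumes "smooth g" shows "Dmulti is (diffop i h g) = diffop i h (Dmulti is g)"
proof -
  have "Dmulti is (\<lambda>y. 1 * (\<lambda>y. g (y + h *\<^sub>R axis i 1)) y + (-1) * g y) =
     (\<lambda>y. 1 * Dmulti is (\<lambda>y. g (y + h *\<^sub>R axis i 1)) y + (-1) * Dmulti is g y)"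
    by (rule Dmulti_lin[OF smooth_transl[OF assms] assms])
  then show ?thesis unfolding diffop_lin[of i h g] Dmulti_transl[OF assms]
    by (simp add: diffop_def)
qed

lemma idiff_upper:
  assumes "smooth g" "\<And>y. cmod (Dmulti (map fst ps) g y) \<le> c"
  shows "cmod (idiff ps g y) \<le> c * (\<Prod>p\<leftarrow>ps. \<bar>snd p\<bar>)"
  using assms
proof (induction ps arbitrary: g c)
  case Nil then show ?case by simp
next
  case (Cons p ps)
  obtain i h where p: "p = (i, h)" by (cases p)
  have "cmod (Dmulti (map fst ps) (diffop i h g) z) \<le> c * \<bar>h\<bar>" for z
  proof -
    have "cmod (Dmulti (map fst ps) (diffop i h g) z) = cmod (Dmulti (map fst ps) g (z + h *\<^sub>R axis i 1) - Dmulti (map fst ps) g z)"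
      using Dmulti_diffop[OF Cons.prems(1)] by (simp add: diffop_def)
    also have "\<dots> \<le> c * \<bar>h\<bar>"
      by (rule mvt_coord) (use Cons.prems p in \<open>auto simp: smooth_def\<close>)
    finally show ?thesis .
  qed
  from Cons.IH[OF smooth_diffop[OF Cons.prems(1)] this]
  show ?case using p by (simp add: mult_ac)
qed

lemma idiff_lower:
  assumes "smooth g" "\<And>ps y. map fst ps = is \<Longrightarrow> cmod (idiff ps g y) \<le> c * (\<Prod>p\<leftarrow>ps. \<bar>snd p\<bar>)"
  shows "cmod (Dmulti is g y) \<le> c"
  using assms
proof (induction "is" arbitrary: g c y)
  case Nil
  from Nil.prems(2)[of "[]" y] show ?case by simp
next
  case (Cons i "is")
  have "cmod (Dmulti is g (y + h *\<^sub>R axis i 1) - Dmulti is g y) \<le> c * \<bar>h\<bar>" for h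
  proof -
    have "cmod (Dmulti is (diffop i h g) y) \<le> c * \<bar>h\<bar>"
    proof (rule Cons.IH[OF smooth_diffop[OF Cons.prems(1)]])
      fix ps :: "(_ \<times> real) list" and z assume "map fst ps = is"
      then have "cmod (idiff ((i, h) # ps) g z) \<le> c * (\<Prod>p\<leftarrow>(i, h) # ps. \<bar>snd p\<bar>)"
        using Cons.prems(2)[of "(i, h) # ps" z] by simp
      then show "cmod (idiff ps (diffop i h g) z) \<le> c * \<bar>h\<bar> * (\<Prod>p\<leftarrow>ps. \<bar>snd p\<bar>)"
        by (simp add: mult_ac)
    qed
    then show ?thesis using Dmulti_diffop[OF Cons.prems(1)] by (simp add: diffop_def)
  qed
  then show ?case
    using dq_bound[of "Dmulti is g" y i c] Cons.prems(1) by (simp add: smooth_def)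
qed

definition wt :: "'d list \<Rightarrow> real" where "wt is = 1 / real (Suc (length is))"

definition dK :: "(real^'d::finite \<Rightarrow> complex) \<Rightarrow> (real^'d \<Rightarrow> complex) \<Rightarrow> real" where
  "dK \<phi> \<psi> = (SUP p :: ('d list \<times> (real^'d)). min (wt (fst p)) (cmod (Dmulti (fst p) \<phi> (snd p) - Dmulti (fst p) \<psi> (snd p))))"

definition DK :: "(real^'d::finite) set \<Rightarrow> (real^'d \<Rightarrow> complex) set" where
  "DK K = {\<phi>. test_fun \<phi> \<and> tsupport \<phi> \<subseteq> K}"

lemma wt_pos: "0 < wt is" and wt_le1: "wt is \<le> 1" and wt_Nil[simp]: "wt [] = 1"
  by (auto simp: wt_def)

lemma min_tri: "0 < (w::real) \<Longrightarrow> 0 \<le> a \<Longrightarrow> 0 \<le> b \<Longrightarrow> c \<le> a + b \<Longrightarrow> min w c \<le> min w a + min w b"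
  by (auto simp: min_def)

lemma dK_bdd: "bdd_above (range (\<lambda>p :: ('d::finite list \<times> (real^'d)). min (wt (fst p)) (cmod (Dmulti (fst p) \<phi> (snd p) - Dmulti (fst p) \<psi> (snd p)))))"
  by (rule bdd_aboveI[of _ 1]) (auto simp: wt_le1 min.coboundedI1)

lemma dK_term_le: "min (wt is) (cmod (Dmulti is \<phi> x - Dmulti is \<psi> x)) \<le> dK \<phi> \<psi>"
  unfolding dK_def using cSUP_upper[OF UNIV_I dK_bdd, of "(is, x)" \<phi> \<psi>] by simp

lemma dK_le: "(\<And>is x. min (wt is) (cmod (Dmulti is \<phi> x - Dmulti is \<psi> x)) \<le> B) \<Longrightarrow> dK \<phi> \<psi> \<le> B"
  unfolding dK_def by (rule cSUP_least) auto

lemma dK_nonneg: "0 \<le> dK \<phi> \<psi>"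
  using dK_term_le[of "[]" \<phi> 0 \<psi>] wt_pos[of "[]"] by (smt (verit) norm_ge_zero)

lemma dK_commute: "dK \<phi> \<psi> = dK \<psi> \<phi>"
  unfolding dK_def by (simp add: norm_minus_commute)

lemma dK_zero:
  fixes \<phi> :: "real^'d::finite \<Rightarrow> complex"
  shows "dK \<phi> \<psi> = 0 \<longleftrightarrow> \<phi> = \<psi>"
proof
  assume 0: "dK \<phi> \<psi> = 0"
  show "\<phi> = \<psi>"
  proof
    fix x
    have h: "min (wt ([]::'d list)) (cmod (Dmulti [] \<phi> x - Dmulti [] \<psi> x)) \<le> dK \<phi> \<psi>"
      by (rule dK_term_le)
    show "\<phi> x = \<psi> x" using h 0 by (auto simp: min_def split: if_splits)
  qed
next
  assume "\<phi> = \<psi>"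
  then have "dK \<phi> \<psi> \<le> 0" by (intro dK_le) auto
  then show "dK \<phi> \<psi> = 0" using dK_nonneg by (meson order_antisym)
qed

lemma dK_triangle: "dK \<phi> \<rho> \<le> dK \<phi> \<psi> + dK \<psi> \<rho>"
proof (rule dK_le)
  fix "is" x
  have "cmod (Dmulti is \<phi> x - Dmulti is \<rho> x) \<le> cmod (Dmulti is \<phi> x - Dmulti is \<psi> x) + cmod (Dmulti is \<psi> x - Dmulti is \<rho> x)"
    by (rule norm_diff_triangle_ineq[THEN order_trans[rotated]]) simp
  then have "min (wt is) (cmod (Dmulti is \<phi> x - Dmulti is \<rho> x)) \<le>
     min (wt is) (cmod (Dmulti is \<phi> x - Dmulti is \<psi> x)) + min (wt is) (cmod (Dmulti is \<psi> x - Dmulti is \<rho> x))"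
    by (rule min_tri[OF wt_pos norm_ge_zero norm_ge_zero])
  also have "\<dots> \<le> dK \<phi> \<psi> + dK \<psi> \<rho>" by (intro add_mono dK_term_le)
  finally show "min (wt is) (cmod (Dmulti is \<phi> x - Dmulti is \<rho> x)) \<le> dK \<phi> \<psi> + dK \<psi> \<rho>" .
qed

lemma Metric_DK: "Metric_space (DK K) dK"
  by unfold_locales (auto simp: dK_nonneg dK_commute dK_zero dK_triangle)

definition Dconv :: "(nat \<Rightarrow> real^'d::finite \<Rightarrow> complex) \<Rightarrow> (real^'d \<Rightarrow> complex) \<Rightarrow> bool" where
  "Dconv \<sigma> \<phi> \<longleftrightarrow> (\<forall>is. uniform_limit UNIV (\<lambda>n. Dmulti is (\<sigma> n)) (Dmulti is \<phi>) sequentially)"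

lemma dK_imp_Dconv:
  fixes \<sigma> :: "nat \<Rightarrow> real^'d::finite \<Rightarrow> complex"
  assumes "(\<lambda>n. dK (\<sigma> n) \<phi>) \<longlonglongrightarrow> 0"
  shows "Dconv \<sigma> \<phi>"
  unfolding Dconv_def uniform_limit_iff
proof (intro allI impI)
  fix "is" :: "'d list" and e :: real assume e: "e > 0"
  have "min e (wt is) > 0" using e wt_pos by simp
  then have "eventually (\<lambda>n. dK (\<sigma> n) \<phi> < min e (wt is)) sequentially"
    by (rule order_tendstoD(2)[OF assms])
  then show "\<forall>\<^sub>F n in sequentially. \<forall>x\<in>UNIV. dist (Dmulti is (\<sigma> n) x) (Dmulti is \<phi> x) < e"
  proof eventually_elim
    case (elim n)
    show ?case
    proof
      fix x
      have "min (wt is) (cmod (Dmulti is (\<sigma> n) x - Dmulti is \<phi> x)) < min e (wt is)"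
        using dK_term_le[of "is" "\<sigma> n" x \<phi>] elim by linarith
      then show "dist (Dmulti is (\<sigma> n) x) (Dmulti is \<phi> x) < e"
        by (auto simp: dist_norm min_def split: if_splits)
    qed
  qed
qed

lemma Dconv_imp_dK:
  fixes \<sigma> :: "nat \<Rightarrow> real^'d::finite \<Rightarrow> complex"
  assumes "Dconv \<sigma> \<phi>"
  shows "(\<lambda>n. dK (\<sigma> n) \<phi>) \<longlonglongrightarrow> 0"
proof (rule order_tendstoI)
  fix e :: real assume e: "0 < e"
  obtain N0 :: nat where N0: "1 / real (Suc N0) < e / 2"
    using e by (metis half_gt_zero_iff nat_approx_posE)
  define L where "L = {xs :: 'd list. set xs \<subseteq> UNIV \<and> length xs \<le> N0}"
  have fL: "finite L" unfolding L_def by (rule finite_lists_length_le) simp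
  have e2: "e / 2 > 0" using e by simp
  have "\<forall>is\<in>L. eventually (\<lambda>n. \<forall>x\<in>UNIV. dist (Dmulti is (\<sigma> n) x) (Dmulti is \<phi> x) < e / 2) sequentially"
  proof
    fix "is"
    have "uniform_limit UNIV (\<lambda>n. Dmulti is (\<sigma> n)) (Dmulti is \<phi>) sequentially"
      using assms unfolding Dconv_def by blast
    from this[unfolded uniform_limit_iff, rule_format, OF e2]
    show "eventually (\<lambda>n. \<forall>x\<in>UNIV. dist (Dmulti is (\<sigma> n) x) (Dmulti is \<phi> x) < e / 2) sequentially" .
  qed
  from eventually_ball_finite[OF fL this]
  show "eventually (\<lambda>n. dK (\<sigma> n) \<phi> < e) sequentially"
  proof eventually_elim
    case (elim n)
    have "dK (\<sigma> n) \<phi> \<le> e / 2"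
    proof (rule dK_le)
      fix "is" x
      show "min (wt is) (cmod (Dmulti is (\<sigma> n) x - Dmulti is \<phi> x)) \<le> e / 2"
      proof (cases "is \<in> L")
        case True then have "cmod (Dmulti is (\<sigma> n) x - Dmulti is \<phi> x) < e / 2"
          using elim by (simp add: dist_norm)
        then show ?thesis by (simp add: min.coboundedI2)
      next
        case False
        then have "length is > N0" by (auto simp: L_def)
        then have "wt is \<le> 1 / real (Suc N0)" unfolding wt_def by (intro divide_left_mono) auto
        then show ?thesis using N0 by (simp add: min.coboundedI1)
      qed
    qed
    then show ?case using e by simp
  qed
next
  fix e :: real assume "e < 0"
  then show "eventually (\<lambda>n. e < dK (\<sigma> n) \<phi>) sequentially"
  proof -
    have "\<forall>n. e < dK (\<sigma> n) \<phi>" using \<open>e < 0\<close> dK_nonneg by (meson less_le_trans)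
    then show ?thesis by (simp add: always_eventually)
  qed
qed


lemma linear_expand:
  fixes F :: "real^'d::finite \<Rightarrow> complex"
  assumes "linear F"
  shows "F h = (\<Sum>j\<in>UNIV. of_real (h$j) * F (axis j 1))"
proof -
  have "F h = F (\<Sum>j\<in>UNIV. (h$j) *\<^sub>R axis j 1)"
    using basis_expansion[of h] by (simp add: scalar_mult_eq_scaleR)
  also have "\<dots> = (\<Sum>j\<in>UNIV. F ((h$j) *\<^sub>R axis j 1))"
    by (rule linear_sum[OF assms])
  also have "\<dots> = (\<Sum>j\<in>UNIV. of_real (h$j) * F (axis j 1))"
    by (rule sum.cong[OF refl], subst linear_scale[OF assms]) (simp add: scaleR_conv_of_real)
  finally show ?thesis .
qed

lemma unif_deriv:
  fixes \<sigma> :: "nat \<Rightarrow> real^'d::finite \<Rightarrow> complex"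
  assumes sm: "\<And>n. smooth (\<sigma> n)"
    and ul: "\<And>is. uniform_limit UNIV (\<lambda>n. Dmulti is (\<sigma> n)) (G is) sequentially"
  shows "(G is has_derivative (\<lambda>h. \<Sum>j\<in>UNIV. of_real (h$j) * G (j#is) x)) (at x)"
proof -
  let ?f = "\<lambda>n. Dmulti is (\<sigma> n)"
  let ?f' = "\<lambda>n x. frechet_derivative (?f n) (at x)"
  let ?g' = "\<lambda>x h. \<Sum>j\<in>UNIV. of_real (h$j) * G (j#is) x"
  have der: "(?f n has_derivative ?f' n x) (at x within UNIV)" for n x
    using smooth_deriv[OF sm] by simp
  have nle: "eventually (\<lambda>n. \<forall>x\<in>UNIV. \<forall>h. norm (?f' n x h - ?g' x h) \<le> e * norm h) sequentially"
    if e: "e > 0" for e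
  proof -
    define e' where "e' = e / real CARD('d)"
    have e': "e' > 0" using e by (simp add: e'_def)
    have "\<forall>j\<in>UNIV. eventually (\<lambda>n. \<forall>x\<in>UNIV. dist (Dmulti (j#is) (\<sigma> n) x) (G (j#is) x) < e') sequentially"
      using ul[unfolded uniform_limit_iff, rule_format, OF e'] by blast
    from eventually_ball_finite[OF finite_class.finite_UNIV this]
    show ?thesis
    proof eventually_elim
      case (elim n)
      show ?case
      proof (intro ballI allI)
        fix x h
        have lin: "linear (?f' n x)" using der[of n x] has_derivative_linear by blast
        have "?f' n x h - ?g' x h = (\<Sum>j\<in>UNIV. of_real (h$j) * (Dmulti (j#is) (\<sigma> n) x - G (j#is) x))"
          unfolding linear_expand[OF lin, of h] by (simp add: pdiff_def sum_subtractf algebra_simps)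
        also have "norm \<dots> \<le> (\<Sum>j\<in>UNIV. norm (of_real (h$j) * (Dmulti (j#is) (\<sigma> n) x - G (j#is) x)))"
          by (rule norm_sum)
        also have "\<dots> \<le> (\<Sum>j\<in>(UNIV::'d set). norm h * e')"
        proof (rule sum_mono)
          fix j :: 'd assume "j \<in> UNIV"
          have "\<bar>h$j\<bar> \<le> norm h" by (rule component_le_norm_cart)
          moreover have "cmod (Dmulti (j#is) (\<sigma> n) x - G (j#is) x) \<le> e'"
            using elim by (simp add: dist_norm less_imp_le)
          ultimately show "norm (of_real (h$j) * (Dmulti (j#is) (\<sigma> n) x - G (j#is) x)) \<le> norm h * e'"
            by (simp add: norm_mult mult_mono)
        qed
        also have "\<dots> = e * norm h" by (simp add: e'_def)
        finally show "norm (?f' n x h - ?g' x h) \<le> e * norm h" .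
      qed
    qed
  qed
  have lim: "(\<lambda>n. ?f n x) \<longlonglongrightarrow> G is x"
    using tendsto_uniform_limitI[OF ul] by blast
  obtain g where g: "\<And>x. (\<lambda>n. ?f n x) \<longlonglongrightarrow> g x \<and> (g has_derivative ?g' x) (at x within UNIV)"
    using has_derivative_sequence[OF convex_UNIV der nle UNIV_I lim] by blast
  have "g = G is"
  proof
    fix y show "g y = G is y"
      using g[of y] tendsto_uniform_limitI[OF ul, of y] LIMSEQ_unique by blast
  qed
  then show ?thesis using g[of x] by simp
qed

lemma unif_smooth:
  fixes \<sigma> :: "nat \<Rightarrow> real^'d::finite \<Rightarrow> complex"
  assumes sm: "\<And>n. smooth (\<sigma> n)"
    and ul: "\<And>is. uniform_limit UNIV (\<lambda>n. Dmulti is (\<sigma> n)) (G is) sequentially"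
  shows "Dmulti is (G []) = G is" and "smooth (G [])"
proof -
  have pd: "pdiff i (G is) x = G (i#is) x" for i "is" x
  proof -
    have "pdiff i (G is) x = (\<Sum>j\<in>UNIV. of_real (axis i 1 $ j) * G (j#is) x)"
      using pdiff_at[OF unif_deriv[OF sm ul]] by simp
    also have "\<dots> = (\<Sum>j\<in>UNIV. if j = i then G (j#is) x else 0)"
      by (rule sum.cong) (auto simp: axis_def)
    also have "\<dots> = G (i#is) x" by simp
    finally show ?thesis .
  qed
  show D: "Dmulti is (G []) = G is" for "is"
    by (induction "is") (auto simp: pd)
  show "smooth (G [])"
    unfolding smooth_def D using unif_deriv[OF sm ul] differentiable_def by blast
qed


lemma DK_complete:
  fixes K :: "(real^'d::finite) set"
  assumes K: "compact K"
  shows "Metric_space.mcomplete (DK K) dK"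
  unfolding Metric_space.mcomplete_def[OF Metric_DK] Metric_space.MCauchy_def[OF Metric_DK]
proof (intro allI impI)
  fix \<sigma> :: "nat \<Rightarrow> real^'d \<Rightarrow> complex"
  assume "range \<sigma> \<subseteq> DK K \<and> (\<forall>\<epsilon>>0. \<exists>N. \<forall>n n'. N \<le> n \<longrightarrow> N \<le> n' \<longrightarrow> dK (\<sigma> n) (\<sigma> n') < \<epsilon>)"
  then have rng: "\<And>n. \<sigma> n \<in> DK K" and C: "\<And>\<epsilon>. \<epsilon> > 0 \<Longrightarrow> \<exists>N. \<forall>n n'. N \<le> n \<longrightarrow> N \<le> n' \<longrightarrow> dK (\<sigma> n) (\<sigma> n') < \<epsilon>"
    by auto
  have sm: "\<And>n. smooth (\<sigma> n)" using rng by (simp add: DK_def test_fun_def)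
  have "\<exists>l. uniform_limit UNIV (\<lambda>n. Dmulti is (\<sigma> n)) l sequentially" for "is"
  proof -
    have "uniformly_Cauchy_on UNIV (\<lambda>n. Dmulti is (\<sigma> n))"
      unfolding uniformly_Cauchy_on_def
    proof (intro allI impI)
      fix e :: real assume e: "e > 0"
      have me: "min e (wt is) > 0" using e wt_pos[of "is"] by simp
      obtain N where N: "\<And>n n'. N \<le> n \<Longrightarrow> N \<le> n' \<Longrightarrow> dK (\<sigma> n) (\<sigma> n') < min e (wt is)"
        using C[OF me] by blast
      show "\<exists>M. \<forall>x\<in>UNIV. \<forall>m\<ge>M. \<forall>n\<ge>M. dist (Dmulti is (\<sigma> m) x) (Dmulti is (\<sigma> n) x) < e"
      proof (intro exI ballI allI impI)
        fix x m n assume "N \<le> m" "N \<le> n"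
        then have "dK (\<sigma> m) (\<sigma> n) < min e (wt is)" by (rule N)
        then have "min (wt is) (cmod (Dmulti is (\<sigma> m) x - Dmulti is (\<sigma> n) x)) < min e (wt is)"
          using dK_term_le[of "is" "\<sigma> m" x "\<sigma> n"] by linarith
        then show "dist (Dmulti is (\<sigma> m) x) (Dmulti is (\<sigma> n) x) < e"
          by (auto simp: dist_norm min_def split: if_splits)
      qed
    qed
    then show ?thesis
      using Cauchy_uniformly_convergent uniformly_convergent_on_def by blast
  qed
  then obtain G where G: "\<And>is. uniform_limit UNIV (\<lambda>n. Dmulti is (\<sigma> n)) (G is) sequentially"
    by metis
  note GD = unif_smooth[OF sm G]
  let ?\<phi> = "G []"
  have "?\<phi> x = 0" if "x \<notin> K" for x
  proof -
    have "\<sigma> n x = 0" for n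
    proof -
      have "tsupport (\<sigma> n) \<subseteq> K" using rng[of n] by (simp add: DK_def)
      then show ?thesis using that tsupport_zero by blast
    qed
    then have z: "(\<lambda>n. \<sigma> n x) \<longlonglongrightarrow> 0" by simp
    have "(\<lambda>n. \<sigma> n x) \<longlonglongrightarrow> ?\<phi> x"
      using tendsto_uniform_limitI[OF G[of "[]"], of x] by simp
    from LIMSEQ_unique[OF z this] show ?thesis by simp
  qed
  then have "{x. ?\<phi> x \<noteq> 0} \<subseteq> K" by blast
  then have sub: "tsupport ?\<phi> \<subseteq> K"
    unfolding tsupport_def using K by (simp add: closure_minimal compact_imp_closed)
  then have inDK: "?\<phi> \<in> DK K"
    using compact_closed_sub[OF K closed_tsupport sub] GD(2) unfolding DK_def test_fun_def by blast
  have "Dconv \<sigma> ?\<phi>" unfolding Dconv_def GD(1) using G by blast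
  then have "(\<lambda>n. dK (\<sigma> n) ?\<phi>) \<longlonglongrightarrow> 0" by (rule Dconv_imp_dK)
  then have "limitin (Metric_space.mtopology (DK K) dK) \<sigma> ?\<phi> sequentially"
    unfolding Metric_space.limitin_metric_dist_null[OF Metric_DK] using inDK rng by simp
  then show "\<exists>x. limitin (Metric_space.mtopology (DK K) dK) \<sigma> x sequentially" by blast
qed

lemma M_spec:
  assumes T: "T \<in> DH'" and f: "test_fun \<phi>"
  shows "test_fun (M_op T \<phi>)" "\<And>y. y \<in> Rstar \<Longrightarrow> M_op T \<phi> y = T (\<lambda>\<xi>. \<phi> (cmul \<xi> y))"
proof -
  have "\<exists>g. test_fun g \<and> (\<forall>y\<in>Rstar. g y = T (\<lambda>\<xi>. \<phi> (cmul \<xi> y)))"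
    using T f unfolding DH'_def by blast
  then have "test_fun (M_op T \<phi>) \<and> (\<forall>y\<in>Rstar. M_op T \<phi> y = T (\<lambda>\<xi>. \<phi> (cmul \<xi> y)))"
    unfolding M_op_def by (rule someI_ex)
  then show "test_fun (M_op T \<phi>)" "\<And>y. y \<in> Rstar \<Longrightarrow> M_op T \<phi> y = T (\<lambda>\<xi>. \<phi> (cmul \<xi> y))"
    by auto
qed

lemma test_fun_cmult: "test_fun f \<Longrightarrow> test_fun (\<lambda>x. c * f x)"
  using test_fun_lin[of f f c 0] by simp

lemma smooth_cmult: "smooth f \<Longrightarrow> smooth (\<lambda>x. c * f x)"
  using smooth_lin[of f f c 0] by simp

lemma Dmulti_cmult: "smooth f \<Longrightarrow> Dmulti is (\<lambda>x. c * f x) = (\<lambda>x. c * Dmulti is f x)"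
  using Dmulti_lin[of f f "is" c 0] by simp

lemma T_lin:
  assumes T: "T \<in> DH'" and f: "test_fun f" and g: "test_fun g"
  shows "T (\<lambda>x. a * f x + b * g x) = a * T f + b * T g"
proof -
  have L: "D_linear T" using T unfolding DH'_def distribution_def by blast
  have "T (\<lambda>x. a * f x + b * g x) = T (\<lambda>x. a * f x) + T (\<lambda>x. b * g x)"
    using L test_fun_cmult[OF f] test_fun_cmult[OF g] unfolding D_linear_def by blast
  also have "\<dots> = a * T f + b * T g"
    using L f g unfolding D_linear_def by simp
  finally show ?thesis .
qed

lemma test_fun_cont: "test_fun f \<Longrightarrow> continuous (at x) f"
  using Dmulti_cont[of f x "[]"] by (simp add: test_fun_def)

lemma M_lin:
  fixes f g :: "real^'d::finite \<Rightarrow> complex"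
  assumes T: "T \<in> DH'" and f: "test_fun f" and g: "test_fun g"
  shows "M_op T (\<lambda>x. a * f x + b * g x) = (\<lambda>x. a * M_op T f x + b * M_op T g x)"
proof (rule eq_on_Rstar)
  have fg: "test_fun (\<lambda>x. a * f x + b * g x)" by (rule test_fun_lin[OF f g])
  show "continuous (at x) (M_op T (\<lambda>x. a * f x + b * g x))" for x
    by (rule test_fun_cont[OF M_spec(1)[OF T fg]])
  show "continuous (at x) (\<lambda>x. a * M_op T f x + b * M_op T g x)" for x
    by (intro continuous_intros test_fun_cont[OF M_spec(1)[OF T f]] test_fun_cont[OF M_spec(1)[OF T g]])
  fix y :: "real^'d" assume y: "y \<in> Rstar"
  show "M_op T (\<lambda>x. a * f x + b * g x) y = a * M_op T f y + b * M_op T g y"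
    unfolding M_spec(2)[OF T fg y] M_spec(2)[OF T f y] M_spec(2)[OF T g y]
    using T_lin[OF T test_fun_scale[OF f y] test_fun_scale[OF g y], of a b] by simp
qed

lemma ulim_scale_comp:
  fixes f :: "nat \<Rightarrow> 'a \<Rightarrow> complex" and c :: complex
  assumes "uniform_limit UNIV f l sequentially"
  shows "uniform_limit UNIV (\<lambda>n x. c * f n (L x)) (\<lambda>x. c * l (L x)) sequentially"
  unfolding uniform_limit_iff
proof (intro allI impI)
  fix e :: real assume e: "e > 0"
  define e' where "e' = e / (cmod c + 1)"
  have c1: "cmod c + 1 > 0" by (simp add: add_nonneg_pos)
  have e': "e' > 0" using e c1 unfolding e'_def by (rule divide_pos_pos)
  from assms[unfolded uniform_limit_iff, rule_format, OF e']
  show "\<forall>\<^sub>F n in sequentially. \<forall>x\<in>UNIV. dist (c * f n (L x)) (c * l (L x)) < e"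
  proof eventually_elim
    case (elim n)
    show ?case
    proof
      fix x
      have d: "dist (f n (L x)) (l (L x)) < e'" using elim by blast
      have "dist (c * f n (L x)) (c * l (L x)) = cmod c * dist (f n (L x)) (l (L x))"
        by (simp add: dist_norm norm_mult[symmetric] right_diff_distrib)
      also have "\<dots> \<le> (cmod c + 1) * dist (f n (L x)) (l (L x))"
        by (simp add: mult_right_mono)
      also have "\<dots> < (cmod c + 1) * e'"
        by (rule mult_strict_left_mono[OF d c1])
      also have "\<dots> = e" using c1 by (simp add: e'_def)
      finally show "dist (c * f n (L x)) (c * l (L x)) < e" .
    qed
  qed
qed

lemma M_pointwise:
  assumes T: "T \<in> DH'" and K: "compact K" and sK: "\<And>n. \<sigma> n \<in> DK K" and lK: "\<phi> \<in> DK K"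
    and cv: "Dconv \<sigma> \<phi>" and y: "y \<in> Rstar"
  shows "(\<lambda>n. M_op T (\<sigma> n) y) \<longlonglongrightarrow> M_op T \<phi> y"
proof -
  have tf: "test_fun (\<sigma> n)" for n using sK by (simp add: DK_def)
  have tl: "test_fun \<phi>" using lK by (simp add: DK_def)
  have dist: "distribution T" using T by (simp add: DH'_def)
  have "D_conv (\<lambda>n \<xi>. \<sigma> n (cmul \<xi> y)) (\<lambda>\<xi>. \<phi> (cmul \<xi> y))"
    unfolding D_conv_def
  proof (intro conjI allI)
    show "test_fun (\<lambda>\<xi>. \<sigma> n (cmul \<xi> y))" for n by (rule test_fun_scale[OF tf y])
    show "test_fun (\<lambda>\<xi>. \<phi> (cmul \<xi> y))" by (rule test_fun_scale[OF tl y])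
    show "\<exists>K'. compact K' \<and> (\<forall>n. tsupport (\<lambda>\<xi>. \<sigma> n (cmul \<xi> y)) \<subseteq> K')"
    proof (intro exI conjI allI)
      show "compact ((\<lambda>x. cmul x (inv_vec y)) ` K)" by (rule compact_scale_img[OF K])
      fix n
      have "tsupport (\<sigma> n) \<subseteq> K" using sK by (simp add: DK_def)
      then show "tsupport (\<lambda>\<xi>. \<sigma> n (cmul \<xi> y)) \<subseteq> (\<lambda>x. cmul x (inv_vec y)) ` K"
        using tsupport_scale[OF y, of "\<sigma> n"] by blast
    qed
    fix "is"
    have "uniform_limit UNIV (\<lambda>n. Dmulti is (\<sigma> n)) (Dmulti is \<phi>) sequentially"
      using cv by (simp add: Dconv_def)
    from ulim_scale_comp[OF this, of "of_real (\<Prod>i\<leftarrow>is. y $ i)" "\<lambda>\<xi>. cmul \<xi> y"]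
    show "uniform_limit UNIV (\<lambda>n. Dmulti is (\<lambda>\<xi>. \<sigma> n (cmul \<xi> y))) (Dmulti is (\<lambda>\<xi>. \<phi> (cmul \<xi> y))) sequentially"
      using tf tl by (simp add: Dmulti_scale test_fun_def)
  qed
  then have "(\<lambda>n. T (\<lambda>\<xi>. \<sigma> n (cmul \<xi> y))) \<longlonglongrightarrow> T (\<lambda>\<xi>. \<phi> (cmul \<xi> y))"
    using dist unfolding distribution_def by blast
  then show ?thesis using M_spec(2)[OF T tf y] M_spec(2)[OF T tl y] by simp
qed


definition Cset :: "((real^'d::finite \<Rightarrow> complex) \<Rightarrow> complex) \<Rightarrow> (real^'d) set \<Rightarrow> nat \<Rightarrow> nat \<Rightarrow> (real^'d \<Rightarrow> complex) set" where
 "Cset T K k m = {\<phi> \<in> DK K. (\<forall>y. norm y > real m \<longrightarrow> M_op T \<phi> y = 0) \<and>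
     (\<forall>is. length is \<le> k \<longrightarrow> (\<forall>y. cmod (Dmulti is (M_op T \<phi>) y) \<le> real m))}"

lemma Cset_closed:
  fixes K :: "(real^'d::finite) set"
  assumes T: "T \<in> DH'" and K: "compact K"
  shows "closedin (Metric_space.mtopology (DK K) dK) (Cset T K k m)"
  unfolding Metric_space.metric_closedin_iff_sequentially_closed[OF Metric_DK]
proof (intro conjI allI impI)
  show "Cset T K k m \<subseteq> DK K" by (auto simp: Cset_def)
  fix \<sigma> l assume "range \<sigma> \<subseteq> Cset T K k m \<and> limitin (Metric_space.mtopology (DK K) dK) \<sigma> l sequentially"
  then have sC: "\<And>n. \<sigma> n \<in> Cset T K k m" and lim: "limitin (Metric_space.mtopology (DK K) dK) \<sigma> l sequentially"
    by auto
  from lim have lK: "l \<in> DK K" and d0: "(\<lambda>n. dK (\<sigma> n) l) \<longlonglongrightarrow> 0"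
    by (simp_all add: Metric_space.limitin_metric_dist_null[OF Metric_DK])
  have sK: "\<And>n. \<sigma> n \<in> DK K" using sC by (simp add: Cset_def)
  have cv: "Dconv \<sigma> l" by (rule dK_imp_Dconv[OF d0])
  note pw = M_pointwise[OF T K sK lK cv]
  have tl: "test_fun (M_op T l)" using M_spec(1)[OF T] lK by (simp add: DK_def)
  have van: "M_op T l y = 0" if y: "norm y > real m" for y
  proof -
    have "cmod (M_op T l y) \<le> 0"
    proof (rule ext_bound[of y "M_op T l" "{0}" "{y. real m < norm y}"])
      show "continuous (at y) (M_op T l)" by (rule test_fun_cont[OF tl])
      show "open {y. real m < norm (y::real^'d)}" by (intro open_Collect_less continuous_intros)
      show "y \<in> {y. real m < norm y}" using y by simp
      fix z :: "real^'d" assume z: "z \<in> {y. real m < norm y}" "\<forall>a\<in>{0}. z + a \<in> Rstar"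
      then have zR: "z \<in> Rstar" by simp
      have "M_op T (\<sigma> n) z = 0" for n using sC[of n] z(1) by (simp add: Cset_def)
      then have "(\<lambda>n. M_op T (\<sigma> n) z) \<longlonglongrightarrow> 0" by simp
      from LIMSEQ_unique[OF this pw[OF zR]] show "cmod (M_op T l z) \<le> 0" by simp
    qed simp
    then show ?thesis by simp
  qed
  have der: "cmod (Dmulti is (M_op T l) y) \<le> real m" if len: "length is \<le> k" for "is" y
  proof (rule idiff_lower)
    show "smooth (M_op T l)" using tl by (simp add: test_fun_def)
    fix ps :: "('d \<times> real) list" and z :: "real^'d" assume ps: "map fst ps = is"
    show "cmod (idiff ps (M_op T l) z) \<le> real m * (\<Prod>p\<leftarrow>ps. \<bar>snd p\<bar>)"
    proof (rule ext_bound[of z _ "shifts ps" UNIV])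
      show "continuous (at z) (idiff ps (M_op T l))"
        by (rule idiff_cont) (rule test_fun_cont[OF tl])
      show "finite (shifts ps)" by (rule finite_shifts)
      fix w :: "real^'d" assume w: "\<forall>a\<in>shifts ps. w + a \<in> Rstar"
      have L: "(\<lambda>n. idiff ps (M_op T (\<sigma> n)) w) \<longlonglongrightarrow> idiff ps (M_op T l) w"
        by (rule idiff_lim) (use pw w in blast)
      have B: "cmod (idiff ps (M_op T (\<sigma> n)) w) \<le> real m * (\<Prod>p\<leftarrow>ps. \<bar>snd p\<bar>)" for n
      proof (rule idiff_upper)
        have "test_fun (M_op T (\<sigma> n))" using M_spec(1)[OF T] sK[of n] by (simp add: DK_def)
        then show "smooth (M_op T (\<sigma> n))" by (simp add: test_fun_def)
        show "cmod (Dmulti (map fst ps) (M_op T (\<sigma> n)) y) \<le> real m" for y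
          using sC[of n] len ps by (auto simp: Cset_def)
      qed
      show "cmod (idiff ps (M_op T l) w) \<le> real m * (\<Prod>p\<leftarrow>ps. \<bar>snd p\<bar>)"
        by (rule tendsto_upperbound[OF tendsto_norm[OF L]]) (use B in \<open>auto intro: always_eventually\<close>)
    qed auto
  qed
  show "l \<in> Cset T K k m" using lK van der by (auto simp: Cset_def)
qed

lemma Cset_Union:
  fixes K :: "(real^'d::finite) set"
  assumes T: "T \<in> DH'"
  shows "(\<Union>m. Cset T K k m) = DK K"
proof
  show "(\<Union>m. Cset T K k m) \<subseteq> DK K" by (auto simp: Cset_def)
  show "DK K \<subseteq> (\<Union>m. Cset T K k m)"
  proof
    fix \<phi> assume \<phi>: "\<phi> \<in> DK K"
    have tM: "test_fun (M_op T \<phi>)" using M_spec(1)[OF T] \<phi> by (simp add: DK_def)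
    then have "bounded (tsupport (M_op T \<phi>))" by (simp add: test_fun_def compact_imp_bounded)
    then obtain R where R: "\<And>y. y \<in> tsupport (M_op T \<phi>) \<Longrightarrow> norm y \<le> R"
      by (auto simp: bounded_iff)
    have "\<forall>is. \<exists>B. \<forall>y. cmod (Dmulti is (M_op T \<phi>) y) \<le> B"
      using test_fun_bounded[OF tM] by blast
    then obtain Bf where Bf: "\<And>is y. cmod (Dmulti is (M_op T \<phi>) y) \<le> Bf is" by metis
    define L where "L = {xs :: 'd list. set xs \<subseteq> UNIV \<and> length xs \<le> k}"
    have fL: "finite L" unfolding L_def by (rule finite_lists_length_le) simp
    define B where "B = Max (Bf ` L)"
    have BL: "Bf is \<le> B" if "length is \<le> k" for "is"
      unfolding B_def using fL that by (intro Max_ge) (auto simp: L_def)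
    define m where "m = nat \<lceil>max R B\<rceil>"
    have mR: "R \<le> real m" and mB: "B \<le> real m" unfolding m_def by linarith+
    have "\<phi> \<in> Cset T K k m"
      unfolding Cset_def
    proof (intro CollectI conjI allI impI)
      show "\<phi> \<in> DK K" by (rule \<phi>)
      fix y :: "real^'d" assume "real m < norm y"
      then have "y \<notin> tsupport (M_op T \<phi>)" using R mR by force
      then show "M_op T \<phi> y = 0" by (rule tsupport_zero)
    next
      fix "is" :: "'d list" and y :: "real^'d" assume "length is \<le> k"
      then show "cmod (Dmulti is (M_op T \<phi>) y) \<le> real m"
        using Bf[of "is" y] BL[of "is"] mB by linarith
    qed
    then show "\<phi> \<in> (\<Union>m. Cset T K k m)" by blast
  qed
qed


lemma tsupport_lin: "tsupport (\<lambda>x. a * f x + b * g x) \<subseteq> tsupport f \<union> tsupport g"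
proof -
  have "{x. a * f x + b * g x \<noteq> 0} \<subseteq> {x. f x \<noteq> 0} \<union> {x. g x \<noteq> 0}" by auto
  then show ?thesis
    unfolding tsupport_def closure_Un[symmetric] by (rule closure_mono)
qed

lemma DK_lin: "f \<in> DK K \<Longrightarrow> g \<in> DK K \<Longrightarrow> (\<lambda>x. a * f x + b * g x) \<in> DK K"
  using tsupport_lin[of a f b g] test_fun_lin[of f g a b] unfolding DK_def by blast

lemma DK_zero: "(\<lambda>x. 0) \<in> DK K"
  unfolding DK_def using test_fun_zero by (simp add: tsupport_def)

lemma baire_step:
  fixes K :: "(real^'d::finite) set"
  assumes T: "T \<in> DH'" and K: "compact K"
  shows "\<exists>R B r. r > 0 \<and> (\<forall>\<rho>\<in>DK K. dK \<rho> (\<lambda>x. 0) < r \<longrightarrow>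
     (\<forall>y. norm y > R \<longrightarrow> M_op T \<rho> y = 0) \<and>
     (\<forall>is. length is \<le> k \<longrightarrow> (\<forall>y. cmod (Dmulti is (M_op T \<rho>) y) \<le> B)))"
proof -
  interpret Ms: Metric_space "DK K" dK by (rule Metric_DK)
  have "\<exists>m. Ms.mtopology interior_of (Cset T K k m) \<noteq> {}"
  proof (rule ccontr)
    assume "\<not> (\<exists>m. Ms.mtopology interior_of (Cset T K k m) \<noteq> {})"
    then have all: "\<And>m. Ms.mtopology interior_of (Cset T K k m) = {}" by blast
    have "Ms.mtopology interior_of \<Union>(range (Cset T K k)) = {}"
    proof (rule Ms.metric_Baire_category_alt[OF DK_complete[OF K]])
      show "countable (range (Cset T K k))" by simp
      fix S assume "S \<in> range (Cset T K k)"
      then show "closedin Ms.mtopology S \<and> Ms.mtopology interior_of S = {}"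
        using Cset_closed[OF T K] all by auto
    qed
    moreover have "\<Union>(range (Cset T K k)) = DK K" using Cset_Union[OF T] by simp
    moreover have "Ms.mtopology interior_of DK K = DK K"
      using interior_of_topspace[of Ms.mtopology] by simp
    ultimately show False using DK_zero[of K] by simp
  qed
  then obtain m \<phi>0 where "\<phi>0 \<in> Ms.mtopology interior_of (Cset T K k m)" by blast
  then obtain \<epsilon> where \<phi>0: "\<phi>0 \<in> DK K" and \<epsilon>: "\<epsilon> > 0" and ball: "Ms.mball \<phi>0 \<epsilon> \<subseteq> Cset T K k m"
    using Ms.in_interior_of_mball by blast
  have C0: "\<phi>0 \<in> Cset T K k m" using ball \<phi>0 \<epsilon> by (auto simp: Ms.in_mball dK_zero)
  have main: "(\<forall>y. norm y > real m \<longrightarrow> M_op T \<rho> y = 0) \<and>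
     (\<forall>is. length is \<le> k \<longrightarrow> (\<forall>y. cmod (Dmulti is (M_op T \<rho>) y) \<le> 2 * real m))"
    if \<rho>: "\<rho> \<in> DK K" and d: "dK \<rho> (\<lambda>x. 0) < \<epsilon>" for \<rho>
  proof -
    let ?\<psi> = "\<lambda>x. 1 * \<phi>0 x + 1 * \<rho> x"
    have \<psi>: "?\<psi> \<in> DK K" by (rule DK_lin[OF \<phi>0 \<rho>])
    have tf0: "test_fun \<phi>0" and tf\<rho>: "test_fun \<rho>" and tf\<psi>: "test_fun ?\<psi>"
      using \<phi>0 \<rho> \<psi> by (auto simp: DK_def)
    have sm0: "smooth \<phi>0" and sm\<rho>: "smooth \<rho>" using tf0 tf\<rho> by (auto simp: test_fun_def)
    have "cmod (Dmulti is \<phi>0 x - Dmulti is ?\<psi> x) = cmod (Dmulti is \<rho> x - Dmulti is (\<lambda>x. 0) x)" for "is" x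
      using Dmulti_lin[OF sm0 sm\<rho>, of "is" 1 1] by (simp add: Dmulti_zero)
    then have "dK \<phi>0 ?\<psi> = dK \<rho> (\<lambda>x. 0)" unfolding dK_def by simp
    then have "?\<psi> \<in> Ms.mball \<phi>0 \<epsilon>" using \<phi>0 \<psi> d by (simp add: Ms.in_mball)
    then have C\<psi>: "?\<psi> \<in> Cset T K k m" using ball by blast
    have Mpsi: "M_op T ?\<psi> = (\<lambda>x. 1 * M_op T \<phi>0 x + 1 * M_op T \<rho> x)"
      by (rule M_lin[OF T tf0 tf\<rho>])
    have Mchi: "M_op T \<rho> = (\<lambda>x. 1 * M_op T ?\<psi> x + (-1) * M_op T \<phi>0 x)"
      unfolding Mpsi by simp
    have smM: "smooth (M_op T ?\<psi>)" "smooth (M_op T \<phi>0)"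
      using M_spec(1)[OF T tf\<psi>] M_spec(1)[OF T tf0] by (auto simp: test_fun_def)
    show ?thesis
    proof (intro conjI allI impI)
      fix y :: "real^'d" assume "real m < norm y"
      then show "M_op T \<rho> y = 0" using C\<psi> C0 by (subst Mchi) (simp add: Cset_def)
    next
      fix "is" :: "'d list" and y :: "real^'d" assume len: "length is \<le> k"
      have "Dmulti is (M_op T \<rho>) y = Dmulti is (M_op T ?\<psi>) y - Dmulti is (M_op T \<phi>0) y"
        by (subst Mchi, subst Dmulti_lin[OF smM]) simp
      moreover have "cmod (Dmulti is (M_op T ?\<psi>) y) \<le> real m" "cmod (Dmulti is (M_op T \<phi>0) y) \<le> real m"
        using C\<psi> C0 len by (auto simp: Cset_def)
      ultimately show "cmod (Dmulti is (M_op T \<rho>) y) \<le> 2 * real m"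
        using norm_triangle_ineq4[of "Dmulti is (M_op T ?\<psi>) y" "Dmulti is (M_op T \<phi>0) y"] by simp
    qed
  qed
  show ?thesis using \<epsilon> main by blast
qed


lemma DK_cmult: "f \<in> DK K \<Longrightarrow> (\<lambda>x. c * f x) \<in> DK K"
  using DK_lin[of f K f c 0] by simp

lemma M_cmult: "T \<in> DH' \<Longrightarrow> test_fun f \<Longrightarrow> M_op T (\<lambda>x. c * f x) = (\<lambda>x. c * M_op T f x)"
  using M_lin[of T f f c 0] by simp

lemma ulim_null:
  fixes c :: "nat \<Rightarrow> complex" and h :: "'a \<Rightarrow> complex"
  assumes bh: "\<And>x. cmod (h x) \<le> Bh" and c: "c \<longlonglongrightarrow> 0"
  shows "uniform_limit UNIV (\<lambda>j x. c j * h x) (\<lambda>x. 0) sequentially"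
  unfolding uniform_limit_iff
proof (intro allI impI)
  fix e :: real assume e: "e > 0"
  have B1: "Bh + 1 > 0" using bh[of undefined] norm_ge_zero[of "h undefined"] by linarith
  have "e / (Bh + 1) > 0" using e B1 by (rule divide_pos_pos)
  moreover have "(\<lambda>j. cmod (c j)) \<longlonglongrightarrow> 0" using tendsto_norm[OF c] by simp
  ultimately have "eventually (\<lambda>j. cmod (c j) < e / (Bh + 1)) sequentially"
    by (rule order_tendstoD(2)[rotated])
  then show "\<forall>\<^sub>F j in sequentially. \<forall>x\<in>UNIV. dist (c j * h x) 0 < e"
  proof eventually_elim
    case (elim j)
    show ?case
    proof
      fix x
      have "dist (c j * h x) 0 = cmod (c j) * cmod (h x)" by (simp add: norm_mult)
      also have "\<dots> \<le> cmod (c j) * (Bh + 1)" using bh[of x] by (intro mult_left_mono) auto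
      also have "\<dots> < e / (Bh + 1) * (Bh + 1)" using elim B1 by (intro mult_strict_right_mono)
      also have "\<dots> = e" using B1 by simp
      finally show "dist (c j * h x) 0 < e" .
    qed
  qed
qed

lemma support_bound:
  fixes K :: "(real^'d::finite) set"
  assumes T: "T \<in> DH'" and K: "compact K"
  shows "\<exists>R. \<forall>\<rho>\<in>DK K. \<forall>y. norm y > R \<longrightarrow> M_op T \<rho> y = 0"
proof -
  obtain R B r where r: "r > 0" and main: "\<And>\<rho>. \<rho> \<in> DK K \<Longrightarrow> dK \<rho> (\<lambda>x. 0) < r \<Longrightarrow>
     (\<forall>y. norm y > R \<longrightarrow> M_op T \<rho> y = 0)"
    using baire_step[OF T K, of 0] by blast
  have "M_op T \<rho> y = 0" if \<rho>: "\<rho> \<in> DK K" and y: "norm y > R" for \<rho> y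
  proof -
    have tf: "test_fun \<rho>" using \<rho> by (simp add: DK_def)
    have sm: "smooth \<rho>" using tf by (simp add: test_fun_def)
    define c where "c = (\<lambda>j::nat. complex_of_real (1 / real (Suc j)))"
    have c0: "c \<longlonglongrightarrow> 0" unfolding c_def
      using tendsto_of_real[OF LIMSEQ_inverse_real_of_nat, where 'a=complex]
      by (simp only: inverse_eq_divide of_real_0)
    have "Dconv (\<lambda>j x. c j * \<rho> x) (\<lambda>x. 0)"
      unfolding Dconv_def
    proof
      fix "is"
      obtain Bh where "\<And>x. cmod (Dmulti is \<rho> x) \<le> Bh" using test_fun_bounded[OF tf] by blast
      from ulim_null[OF this c0]
      show "uniform_limit UNIV (\<lambda>n. Dmulti is (\<lambda>x. c n * \<rho> x)) (Dmulti is (\<lambda>x. 0)) sequentially"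
        by (simp add: Dmulti_cmult[OF sm] Dmulti_zero)
    qed
    from order_tendstoD(2)[OF Dconv_imp_dK[OF this] r]
    obtain j where "dK (\<lambda>x. c j * \<rho> x) (\<lambda>x. 0) < r"
      by (meson eventually_sequentially order_refl)
    from main[OF DK_cmult[OF \<rho>] this] y have "M_op T (\<lambda>x. c j * \<rho> x) y = 0" by blast
    then have "c j * M_op T \<rho> y = 0" using M_cmult[OF T tf] by simp
    moreover have "c j \<noteq> 0" unfolding c_def of_real_eq_0_iff by simp
    ultimately show ?thesis by simp
  qed
  then show ?thesis by blast
qed


lemma uconv_M:
  fixes K :: "(real^'d::finite) set"
  assumes T: "T \<in> DH'" and K: "compact K" and \<phi>K: "\<And>n. \<phi> n \<in> DK K" and \<psi>K: "\<psi> \<in> DK K"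
    and ul: "\<And>is. uniform_limit UNIV (\<lambda>n. Dmulti is (\<phi> n)) (Dmulti is \<psi>) sequentially"
  shows "uniform_limit UNIV (\<lambda>n. Dmulti is (M_op T (\<phi> n))) (Dmulti is (M_op T \<psi>)) sequentially"
  unfolding uniform_limit_iff
proof (intro allI impI)
  fix e :: real assume e: "e > 0"
  obtain R B r where r: "r > 0" and main: "\<And>\<rho>. \<rho> \<in> DK K \<Longrightarrow> dK \<rho> (\<lambda>x. 0) < r \<Longrightarrow>
     (\<forall>y. cmod (Dmulti is (M_op T \<rho>) y) \<le> B)"
    using baire_step[OF T K, of "length is"] by blast
  define B' where "B' = \<bar>B\<bar> + 1"
  have B': "B' > 0" by (simp add: B'_def add_nonneg_pos)
  define \<epsilon> where "\<epsilon> = e / B'"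
  have \<epsilon>: "\<epsilon> > 0" unfolding \<epsilon>_def using e B' by (rule divide_pos_pos)
  define c where "c = complex_of_real (1 / \<epsilon>)"
  have cn: "cmod c = 1 / \<epsilon>" unfolding c_def norm_of_real using \<epsilon> by simp
  have tf: "test_fun (\<phi> n)" for n using \<phi>K by (simp add: DK_def)
  have t\<psi>: "test_fun \<psi>" using \<psi>K by (simp add: DK_def)
  have sm: "smooth (\<phi> n)" for n using tf by (simp add: test_fun_def)
  have s\<psi>: "smooth \<psi>" using t\<psi> by (simp add: test_fun_def)
  let ?\<rho> = "\<lambda>n x. c * \<phi> n x + (-c) * \<psi> x"
  have \<rho>K: "?\<rho> n \<in> DK K" for n by (rule DK_lin[OF \<phi>K \<psi>K])
  have "Dconv ?\<rho> (\<lambda>x. 0)"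
    unfolding Dconv_def
  proof
    fix is'
    have U: "uniform_limit UNIV (\<lambda>n x. c * Dmulti is' (\<phi> n) x) (\<lambda>x. c * Dmulti is' \<psi> x) sequentially"
      using ulim_scale_comp[OF ul[of is'], of c "\<lambda>x. x"] by simp
    have "uniform_limit UNIV (\<lambda>n x. c * Dmulti is' (\<phi> n) x + (-c) * Dmulti is' \<psi> x) (\<lambda>x. 0) sequentially"
      unfolding uniform_limit_iff
    proof (intro allI impI)
      fix e' :: real assume "e' > 0"
      from U[unfolded uniform_limit_iff, rule_format, OF this]
      show "\<forall>\<^sub>F n in sequentially. \<forall>x\<in>UNIV. dist (c * Dmulti is' (\<phi> n) x + (-c) * Dmulti is' \<psi> x) 0 < e'"
        by eventually_elim (simp add: dist_norm)
    qed
    then show "uniform_limit UNIV (\<lambda>n. Dmulti is' (?\<rho> n)) (Dmulti is' (\<lambda>x. 0)) sequentially"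
      by (simp only: Dmulti_lin[OF sm s\<psi>] Dmulti_zero)
  qed
  from order_tendstoD(2)[OF Dconv_imp_dK[OF this] r]
  show "\<forall>\<^sub>F n in sequentially. \<forall>x\<in>UNIV. dist (Dmulti is (M_op T (\<phi> n)) x) (Dmulti is (M_op T \<psi>) x) < e"
  proof eventually_elim
    case (elim n)
    show ?case
    proof
      fix x
      have sM: "smooth (M_op T (\<phi> n))" "smooth (M_op T \<psi>)"
        using M_spec(1)[OF T tf[of n]] M_spec(1)[OF T t\<psi>] by (auto simp: test_fun_def)
      have "Dmulti is (M_op T (?\<rho> n)) x = c * Dmulti is (M_op T (\<phi> n)) x + (-c) * Dmulti is (M_op T \<psi>) x"
        by (subst M_lin[OF T tf t\<psi>], subst Dmulti_lin[OF sM]) simp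
      also have "\<dots> = c * (Dmulti is (M_op T (\<phi> n)) x - Dmulti is (M_op T \<psi>) x)"
        by (simp add: algebra_simps)
      finally have "cmod c * dist (Dmulti is (M_op T (\<phi> n)) x) (Dmulti is (M_op T \<psi>) x) \<le> B"
        using main[OF \<rho>K elim, rule_format, of x] by (simp add: dist_norm norm_mult)
      then have "dist (Dmulti is (M_op T (\<phi> n)) x) (Dmulti is (M_op T \<psi>) x) \<le> B * \<epsilon>"
        using \<epsilon> unfolding cn by (simp add: field_simps)
      also have "\<dots> < B' * \<epsilon>" using \<epsilon> by (intro mult_strict_right_mono) (auto simp: B'_def)
      also have "\<dots> = e" using B' by (simp add: \<epsilon>_def)
      finally show "dist (Dmulti is (M_op T (\<phi> n)) x) (Dmulti is (M_op T \<psi>) x) < e" .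
    qed
  qed
qed

theorem lemma4:
  fixes T :: "(real^'d::finite \<Rightarrow> complex) \<Rightarrow> complex"
  assumes "T \<in> DH'"
  shows "(\<forall>\<phi>. test_fun \<phi> \<longrightarrow> test_fun (M_op T \<phi>))
       \<and> (\<forall>f g. test_fun f \<longrightarrow> test_fun g \<longrightarrow> M_op T (\<lambda>x. f x + g x) = (\<lambda>x. M_op T f x + M_op T g x))
       \<and> (\<forall>c f. test_fun f \<longrightarrow> M_op T (\<lambda>x. c * f x) = (\<lambda>x. c * M_op T f x))
       \<and> (\<forall>\<phi> \<psi>. D_conv \<phi> \<psi> \<longrightarrow> D_conv (\<lambda>n. M_op T (\<phi> n)) (M_op T \<psi>))"
proof (intro conjI allI impI)
  note T = assms
  show "test_fun (M_op T \<phi>)" if "test_fun \<phi>" for \<phi> using M_spec(1)[OF T that] .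
  show "M_op T (\<lambda>x. f x + g x) = (\<lambda>x. M_op T f x + M_op T g x)" if "test_fun f" "test_fun g" for f g
    using M_lin[OF T that, of 1 1] by simp
  show "M_op T (\<lambda>x. c * f x) = (\<lambda>x. c * M_op T f x)" if "test_fun f" for c f
    by (rule M_cmult[OF T that])
  fix \<phi> :: "nat \<Rightarrow> real^'d \<Rightarrow> complex" and \<psi> :: "real^'d \<Rightarrow> complex" assume dc: "D_conv \<phi> \<psi>"
  then have tf: "\<And>n. test_fun (\<phi> n)" and t\<psi>: "test_fun \<psi>"
    and ul: "\<And>is. uniform_limit UNIV (\<lambda>n. Dmulti is (\<phi> n)) (Dmulti is \<psi>) sequentially"
    by (auto simp: D_conv_def)
  obtain K0 where K0: "compact K0" "\<And>n. tsupport (\<phi> n) \<subseteq> K0" using dc by (auto simp: D_conv_def)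
  define K where "K = K0 \<union> tsupport \<psi>"
  have K: "compact K" unfolding K_def using K0(1) t\<psi> by (simp add: test_fun_def compact_Un)
  have \<phi>K: "\<phi> n \<in> DK K" for n using tf K0(2) by (auto simp: DK_def K_def)
  have \<psi>K: "\<psi> \<in> DK K" using t\<psi> by (auto simp: DK_def K_def)
  have tM: "test_fun (M_op T (\<phi> n))" for n by (rule M_spec(1)[OF T tf])
  have tM\<psi>: "test_fun (M_op T \<psi>)" by (rule M_spec(1)[OF T t\<psi>])
  obtain R where R: "\<And>\<rho> y. \<rho> \<in> DK K \<Longrightarrow> norm y > R \<Longrightarrow> M_op T \<rho> y = 0"
    using support_bound[OF T K] by blast
  have supp: "tsupport (M_op T (\<phi> n)) \<subseteq> tsupport (M_op T \<psi>) \<union> cball 0 R" for n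
  proof -
    have "{y. M_op T (\<phi> n) y \<noteq> 0} \<subseteq> tsupport (M_op T \<psi>) \<union> cball 0 R"
    proof
      fix y assume y: "y \<in> {y. M_op T (\<phi> n) y \<noteq> 0}"
      show "y \<in> tsupport (M_op T \<psi>) \<union> cball 0 R"
      proof (rule ccontr)
        assume "y \<notin> tsupport (M_op T \<psi>) \<union> cball 0 R"
        then have y1: "M_op T \<psi> y = 0" and y2: "norm y > R" using tsupport_zero by auto
        have "M_op T (\<lambda>x. 1 * \<phi> n x + (-1) * \<psi> x) y = 0" by (rule R[OF DK_lin[OF \<phi>K \<psi>K] y2])
        then have "M_op T (\<phi> n) y - M_op T \<psi> y = 0" using M_lin[OF T tf[of n] t\<psi>, of 1 "-1"] by simp
        with y1 y show False by simp
      qed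
    qed
    then show ?thesis unfolding tsupport_def[of "M_op T (\<phi> n)"]
      by (intro closure_minimal) (auto intro: closed_Un closed_cball)
  qed
  show "D_conv (\<lambda>n. M_op T (\<phi> n)) (M_op T \<psi>)"
    unfolding D_conv_def
  proof (intro conjI allI)
    show "test_fun (M_op T (\<phi> n))" for n by (rule tM)
    show "test_fun (M_op T \<psi>)" by (rule tM\<psi>)
    show "\<exists>K. compact K \<and> (\<forall>n. tsupport (M_op T (\<phi> n)) \<subseteq> K)"
      using supp tM\<psi> by (intro exI[of _ "tsupport (M_op T \<psi>) \<union> cball 0 R"]) (auto simp: test_fun_def)
    show "uniform_limit UNIV (\<lambda>n. Dmulti is (M_op T (\<phi> n))) (Dmulti is (M_op T \<psi>)) sequentially" for "is"
      by (rule uconv_M[OF T K \<phi>K \<psi>K ul])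
  qed
qed

end
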